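(* Fix $\epsilon>0$, integers $2\le k\le n$, terminals $T=\{s_1,\dots,s_k\}\subseteq[n]$, and a cost function $c$. Let $\hat x^*$ be the output of the mechanism that samples independent $Z_{\{t,u\}}\sim\mathsf{Lap}(\sqrt2k/\epsilon)$ for every $t\in T$, $u\in[n]\setminus T$ and returns an optimal solution of $$\min_{x}\ \sum_{\{u,v\},u\neq v}c(u,v)\|x_u-x_v\|_1+\sum_{t\in T}\sum_{u\in[n]\setminus T}Z_{\{t,u\}}\|x_t-x_u\|_1\quad\text{s.t. } x_{s_i}=\mathbf{e}_i\ (i\in[k]),\ x_u\in\Delta_k\ (u\in[n]).$$ Then $\mathbb{E}[\mathcal{E}(\hat x^* )]-\mathsf{OPT}(c,n,k)\le O\!\left(\frac{nk\log k}{\epsilon}\right)$, and with high probability $\mathcal{E}(\hat x^* )-\mathsf{OPT}(c,n,k)\le O\!\left(\frac{nk\log(nk)}{\epsilon}\right)$.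
   Context: $\Delta_k=\{x\in\mathbb{R}^k_{\ge0}:\sum_{i}x^{(i)}=1\}$; $\mathbf{e}_i$ is the $i$-th standard basis vector. A cost function is a symmetric $c:[n]\times[n]\to\mathbb{R}_{\ge0}$. For $x\in(\Delta_k)^n$, $\mathcal{E}(x)=\sum_{\{u,v\},u\ne v}c(u,v)\|x_u-x_v\|_1$, and $\mathsf{OPT}(c,n,k)$ is the minimum of $\mathcal{E}(x)$ over $x\in(\Delta_k)^n$ with $x_{s_i}=\mathbf{e}_i$ for all $i$. $\mathsf{Lap}(b)$ is the Laplace distribution with density $\frac1{2b}e^{-|x|/b}$. *)

theory Defs
  imports "HOL-Probability.Probability"
begin

text \<open>Vertices are [n] = {..<n}, colours/coordinates are [k] = {..<k}.
  A point assignment is x :: nat => nat => real, with x u i the i-th coordinate of x_u.\<close>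

definition l1dist :: "nat \<Rightarrow> (nat \<Rightarrow> real) \<Rightarrow> (nat \<Rightarrow> real) \<Rightarrow> real" where
  "l1dist k p q = (\<Sum>i<k. \<bar>p i - q i\<bar>)"

definition in_simplex :: "nat \<Rightarrow> (nat \<Rightarrow> real) \<Rightarrow> bool" where
  "in_simplex k p \<longleftrightarrow> (\<forall>i<k. 0 \<le> p i) \<and> (\<Sum>i<k. p i) = 1"

definition basis_vec :: "nat \<Rightarrow> nat \<Rightarrow> real" where
  "basis_vec i = (\<lambda>j. if j = i then 1 else 0)"

definition feasible :: "nat \<Rightarrow> nat \<Rightarrow> (nat \<Rightarrow> nat) \<Rightarrow> (nat \<Rightarrow> nat \<Rightarrow> real) \<Rightarrow> bool" where
  "feasible n k s x \<longleftrightarrow> (\<forall>u<n. in_simplex k (x u)) \<and>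
     (\<forall>i<k. \<forall>j<k. x (s i) j = basis_vec i j)"

definition energy :: "nat \<Rightarrow> nat \<Rightarrow> (nat \<Rightarrow> nat \<Rightarrow> real) \<Rightarrow> (nat \<Rightarrow> nat \<Rightarrow> real) \<Rightarrow> real" where
  "energy n k c x = (\<Sum>(u,v)\<in>{(u,v). u < v \<and> v < n}. c u v * l1dist k (x u) (x v))"

definition OPT :: "(nat \<Rightarrow> nat \<Rightarrow> real) \<Rightarrow> nat \<Rightarrow> nat \<Rightarrow> (nat \<Rightarrow> nat) \<Rightarrow> real" where
  "OPT c n k s = Inf {energy n k c x | x. feasible n k s x}"

definition terminals :: "nat \<Rightarrow> (nat \<Rightarrow> nat) \<Rightarrow> nat set" where
  "terminals k s = s ` {..<k}"

text \<open>Index set of the noise variables: the unordered pair {t,u} with t a terminal and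
  u a non-terminal is represented by the ordered pair (t,u).\<close>
definition noise_index :: "nat \<Rightarrow> nat \<Rightarrow> (nat \<Rightarrow> nat) \<Rightarrow> (nat \<times> nat) set" where
  "noise_index n k s = terminals k s \<times> ({..<n} - terminals k s)"

definition noisy_objective ::
  "nat \<Rightarrow> nat \<Rightarrow> (nat \<Rightarrow> nat) \<Rightarrow> (nat \<Rightarrow> nat \<Rightarrow> real) \<Rightarrow> (nat \<times> nat \<Rightarrow> real)
     \<Rightarrow> (nat \<Rightarrow> nat \<Rightarrow> real) \<Rightarrow> real" where
  "noisy_objective n k s c Z x = energy n k c x +
     (\<Sum>t\<in>terminals k s. \<Sum>u\<in>{..<n} - terminals k s. Z (t,u) * l1dist k (x t) (x u))"

definition noisy_optimal ::
  "nat \<Rightarrow> nat \<Rightarrow> (nat \<Rightarrow> nat) \<Rightarrow> (nat \<Rightarrow> nat \<Rightarrow> real) \<Rightarrow> (nat \<times> nat \<Rightarrow> real)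
     \<Rightarrow> (nat \<Rightarrow> nat \<Rightarrow> real) \<Rightarrow> bool" where
  "noisy_optimal n k s c Z x \<longleftrightarrow> feasible n k s x \<and>
     (\<forall>y. feasible n k s y \<longrightarrow> noisy_objective n k s c Z x \<le> noisy_objective n k s c Z y)"

definition laplace_density :: "real \<Rightarrow> real \<Rightarrow> real" where
  "laplace_density b x = exp (- \<bar>x\<bar> / b) / (2 * b)"

definition laplace :: "real \<Rightarrow> real measure" where
  "laplace b = density lborel (\<lambda>x. ennreal (laplace_density b x))"

definition noise_measure :: "real \<Rightarrow> nat \<Rightarrow> nat \<Rightarrow> (nat \<Rightarrow> nat) \<Rightarrow> (nat \<times> nat \<Rightarrow> real) measure" where
  "noise_measure eps n k s = PiM (noise_index n k s) (\<lambda>_. laplace (sqrt 2 * real k / eps))"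

definition valid_instance :: "nat \<Rightarrow> nat \<Rightarrow> (nat \<Rightarrow> nat) \<Rightarrow> (nat \<Rightarrow> nat \<Rightarrow> real) \<Rightarrow> bool" where
  "valid_instance n k s c \<longleftrightarrow> 2 \<le> k \<and> k \<le> n \<and> inj_on s {..<k} \<and> s ` {..<k} \<subseteq> {..<n} \<and>
     (\<forall>u v. c u v = c v u) \<and> (\<forall>u v. 0 \<le> c u v)"

end

theory Submission
  imports Defs
begin


lemma exp_density_nn_one:
  assumes "l > 0"
  shows "(\<integral>\<^sup>+x. ennreal (exponential_density l x) \<partial>lborel) = 1"
proof -
  interpret prob_space "density lborel (exponential_density l)"
    using prob_space_exponential_density[OF assms] .
  have "emeasure (density lborel (exponential_density l)) UNIV = 1"
    using emeasure_space_1 by simp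
  then show ?thesis by (simp add: emeasure_density)
qed

lemma nn_exp_abs:
  fixes c :: real assumes c: "c > 0"
  shows "(\<integral>\<^sup>+x. ennreal (exp (-\<bar>x\<bar>/c)) \<partial>lborel) = ennreal (2*c)"
proof -
  let ?e = "exponential_density (1/c)"
  have m[measurable]: "?e \<in> borel_measurable borel" by simp
  have ae: "AE x in lborel. ennreal (exp (-\<bar>x\<bar>/c)) = ennreal c * (ennreal (?e x) + ennreal (?e (-x)))"
    using AE_lborel_singleton[of 0]
  proof eventually_elim
    case (elim x)
    have nn: "0 \<le> ?e x" "0 \<le> ?e (-x)" using c by (auto simp: exponential_density_def)
    have "exp (-\<bar>x\<bar>/c) = c * (?e x + ?e (-x))"
      using elim c by (auto simp: exponential_density_def abs_if field_simps)
    then show ?case using nn c by (simp add: ennreal_mult ennreal_plus[symmetric] del: ennreal_plus)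
  qed
  have refl: "(\<integral>\<^sup>+x. ennreal (?e (-x)) \<partial>lborel) = 1"
    using nn_integral_real_affine[of "\<lambda>x. ennreal (?e x)" "-1" 0] exp_density_nn_one[of "1/c"] c
    by simp
  have "(\<integral>\<^sup>+x. ennreal (exp (-\<bar>x\<bar>/c)) \<partial>lborel)
      = (\<integral>\<^sup>+x. ennreal c * (ennreal (?e x) + ennreal (?e (-x))) \<partial>lborel)"
    by (rule nn_integral_cong_AE[OF ae])
  also have "\<dots> = ennreal c * ((\<integral>\<^sup>+x. ennreal (?e x) \<partial>lborel) + (\<integral>\<^sup>+x. ennreal (?e (-x)) \<partial>lborel))"
    
  proof -
    have "(\<integral>\<^sup>+x. ennreal (?e x) + ennreal (?e (-x)) \<partial>lborel)
      = (\<integral>\<^sup>+x. ennreal (?e x) \<partial>lborel) + (\<integral>\<^sup>+x. ennreal (?e (-x)) \<partial>lborel)"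
      by (rule nn_integral_add; measurable)
    moreover have "(\<integral>\<^sup>+x. ennreal c * (ennreal (?e x) + ennreal (?e (-x))) \<partial>lborel)
      = ennreal c * (\<integral>\<^sup>+x. ennreal (?e x) + ennreal (?e (-x)) \<partial>lborel)"
      by (rule nn_integral_cmult; measurable)
    ultimately show ?thesis by simp
  qed
  also have "\<dots> = ennreal (2*c)"

  proof -
    have "ennreal c * (1 + 1) = ennreal c + ennreal c" by (simp only: distrib_left mult_1_right)
    also have "\<dots> = ennreal (c + c)" using c by (intro ennreal_plus[symmetric]) auto
    also have "\<dots> = ennreal (2*c)" by (simp only: mult_2)
    finally have "ennreal c * (1 + 1) = ennreal (2*c)" .
    moreover have e1: "(\<integral>\<^sup>+x. ennreal (?e x) \<partial>lborel) = 1" using c by (intro exp_density_nn_one) simp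
    ultimately show ?thesis by (simp only: refl e1)
  qed
  finally show ?thesis .
qed

lemma laplace_density_nn: "b > 0 \<Longrightarrow> 0 \<le> laplace_density b x"
  by (simp add: laplace_density_def)

lemma laplace_density_meas[measurable]: "laplace_density b \<in> borel_measurable borel"
  unfolding laplace_density_def by measurable

lemma prob_laplace: assumes b: "b > 0" shows "prob_space (laplace b)"
proof
  have "emeasure (laplace b) (space (laplace b)) = (\<integral>\<^sup>+x. ennreal (laplace_density b x) \<partial>lborel)"
    by (simp add: laplace_def emeasure_density)
  also have "\<dots> = (\<integral>\<^sup>+x. ennreal (1/(2*b)) * ennreal (exp (-\<bar>x\<bar>/b)) \<partial>lborel)"
    using b by (intro nn_integral_cong) (simp add: laplace_density_def ennreal_mult[symmetric])
  also have "\<dots> = ennreal (1/(2*b)) * ennreal (2*b)"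
    using b nn_exp_abs[of b] by (simp add: nn_integral_cmult)
  also have "\<dots> = 1" using b by (simp add: ennreal_mult[symmetric])
  finally show "emeasure (laplace b) (space (laplace b)) = 1" .
qed

lemma laplace_moment:
  assumes b: "b > 0"
  shows "has_bochner_integral (laplace b) (\<lambda>x. exp (\<bar>x\<bar>/(2*b))) 2"
  unfolding laplace_def
proof (rule has_bochner_integral_density)
  show "has_bochner_integral lborel (\<lambda>x. laplace_density b x *\<^sub>R exp (\<bar>x\<bar>/(2*b))) 2"
  proof (rule has_bochner_integral_nn_integral)
    show "(\<lambda>x. laplace_density b x *\<^sub>R exp (\<bar>x\<bar>/(2*b))) \<in> borel_measurable lborel" by measurable
    show "AE x in lborel. 0 \<le> laplace_density b x *\<^sub>R exp (\<bar>x\<bar>/(2*b))"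
      using b by (simp add: laplace_density_nn)
    have eq: "laplace_density b x *\<^sub>R exp (\<bar>x\<bar>/(2*b)) = (1/(2*b)) * exp (-\<bar>x\<bar>/(2*b))" for x
    proof -
      have "exp (-\<bar>x\<bar>/b) * exp (\<bar>x\<bar>/(2*b)) = exp (-\<bar>x\<bar>/(2*b))"
        using b by (simp add: exp_add[symmetric] field_simps)
      then show ?thesis by (simp add: laplace_density_def field_simps)
    qed
    have "(\<integral>\<^sup>+x. ennreal (laplace_density b x *\<^sub>R exp (\<bar>x\<bar>/(2*b))) \<partial>lborel)
        = (\<integral>\<^sup>+x. ennreal (1/(2*b)) * ennreal (exp (-\<bar>x\<bar>/(2*b))) \<partial>lborel)"
      using b by (intro nn_integral_cong, subst eq, subst ennreal_mult) auto
    also have "\<dots> = ennreal (1/(2*b)) * ennreal (2*(2*b))"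
      using b nn_exp_abs[of "2*b"] by (simp add: nn_integral_cmult)
    also have "\<dots> = ennreal 2" using b by (simp add: ennreal_mult[symmetric])
    finally show "(\<integral>\<^sup>+x. ennreal (laplace_density b x *\<^sub>R exp (\<bar>x\<bar>/(2*b))) \<partial>lborel) = ennreal 2" .
  qed simp
next
  show "(\<lambda>x. exp (\<bar>x\<bar>/(2*b))) \<in> borel_measurable lborel" by measurable
next
  show "laplace_density b \<in> borel_measurable lborel" by measurable
next
  show "AE x in lborel. 0 \<le> laplace_density b x" using b by (simp add: laplace_density_nn)
qed



lemma l1_basis:
  assumes p: "in_simplex k p" and i: "i < k" and q: "\<forall>j<k. q j = basis_vec i j"
  shows "l1dist k q p = 2 - 2 * p i"
proof -
  have p0: "\<forall>j<k. 0 \<le> p j" and p1: "(\<Sum>j<k. p j) = 1" using p by (auto simp: in_simplex_def)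
  have ple: "p j \<le> 1" if "j < k" for j
  proof -
    have "p j \<le> (\<Sum>j<k. p j)" using that p0 by (intro member_le_sum) auto
    then show ?thesis using p1 by simp
  qed
  have "l1dist k q p = (\<Sum>j<k. basis_vec i j + p j - 2 * (basis_vec i j * p j))"
    unfolding l1dist_def using q p0 ple by (intro sum.cong) (auto simp: basis_vec_def)
  also have "\<dots> = (\<Sum>j<k. basis_vec i j) + (\<Sum>j<k. p j) - 2 * (\<Sum>j<k. basis_vec i j * p j)"
    by (simp add: sum_subtractf sum.distrib sum_distrib_left)
  also have "(\<Sum>j<k. basis_vec i j) = 1" using i by (simp add: basis_vec_def)
  also have "(\<Sum>j<k. basis_vec i j * p j) = p i" 
  proof -
    have "(\<Sum>j<k. basis_vec i j * p j) = (\<Sum>j<k. if j = i then p j else 0)"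
      by (intro sum.cong) (auto simp: basis_vec_def)
    then show ?thesis using i by simp
  qed
  finally show ?thesis using p1 by simp
qed

lemma simplex_bound:
  assumes p: "in_simplex k p" and z: "\<forall>i<k. \<bar>z i\<bar> \<le> t + h i" and h: "\<forall>i<k. 0 \<le> h i"
  shows "\<bar>\<Sum>i<k. z i * p i\<bar> \<le> t + (\<Sum>i<k. h i)"
proof -
  have p0: "\<forall>j<k. 0 \<le> p j" and p1: "(\<Sum>j<k. p j) = 1" using p by (auto simp: in_simplex_def)
  have ple: "p j \<le> 1" if "j < k" for j
  proof -
    have "p j \<le> (\<Sum>j<k. p j)" using that p0 by (intro member_le_sum) auto
    then show ?thesis using p1 by simp
  qed
  have "\<bar>\<Sum>i<k. z i * p i\<bar> \<le> (\<Sum>i<k. \<bar>z i * p i\<bar>)" by (rule sum_abs)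
  also have "\<dots> \<le> (\<Sum>i<k. t * p i + h i)"
  proof (intro sum_mono)
    fix i assume "i \<in> {..<k}"
    then have "i < k" by simp
    then have "\<bar>z i\<bar> * p i \<le> (t + h i) * p i" "h i * p i \<le> h i"
      using z p0 ple h by (auto intro: mult_right_mono mult_left_le)
    then show "\<bar>z i * p i\<bar> \<le> t * p i + h i" using p0 \<open>i<k\<close>
      by (simp add: abs_mult algebra_simps)
  qed
  also have "\<dots> = t + (\<Sum>i<k. h i)" by (simp add: sum.distrib sum_distrib_left[symmetric] p1)
  finally show ?thesis .
qed

lemma N_eq:
  assumes v: "valid_instance n k s c" and w: "feasible n k s w"
  shows "(\<Sum>t\<in>terminals k s. \<Sum>u\<in>{..<n} - terminals k s. Z (t,u) * l1dist k (w t) (w u))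
    = (\<Sum>u\<in>{..<n} - terminals k s. \<Sum>i<k. Z (s i, u) * (2 - 2 * w u i))"
proof -
  have inj: "inj_on s {..<k}" using v by (simp add: valid_instance_def)
  have "(\<Sum>t\<in>terminals k s. \<Sum>u\<in>{..<n} - terminals k s. Z (t,u) * l1dist k (w t) (w u))
     = (\<Sum>i<k. \<Sum>u\<in>{..<n} - terminals k s. Z (s i,u) * l1dist k (w (s i)) (w u))"
    unfolding terminals_def by (simp add: sum.reindex[OF inj])
  also have "\<dots> = (\<Sum>i<k. \<Sum>u\<in>{..<n} - terminals k s. Z (s i,u) * (2 - 2 * w u i))"
  proof (intro sum.cong refl)
    fix i u assume "i \<in> {..<k}" "u \<in> {..<n} - terminals k s"
    then show "Z (s i,u) * l1dist k (w (s i)) (w u) = Z (s i,u) * (2 - 2 * w u i)"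
      using w by (subst l1_basis) (auto simp: feasible_def)
  qed
  also have "\<dots> = (\<Sum>u\<in>{..<n} - terminals k s. \<Sum>i<k. Z (s i, u) * (2 - 2 * w u i))"
    by (rule sum.swap)
  finally show ?thesis .
qed

lemma det_bound:
  assumes v: "valid_instance n k s c" and x: "noisy_optimal n k s c Z x" and y: "feasible n k s y"
    and zb: "\<forall>i<k. \<forall>u\<in>{..<n} - terminals k s. \<bar>Z (s i, u)\<bar> \<le> t + h (s i, u)"
    and h: "\<forall>p. 0 \<le> h p"
  shows "energy n k c x - energy n k c y \<le> 4 * (\<Sum>u\<in>{..<n} - terminals k s. t + (\<Sum>i<k. h (s i, u)))"
proof -
  let ?U = "{..<n} - terminals k s"
  have xf: "feasible n k s x" and le: "noisy_objective n k s c Z x \<le> noisy_objective n k s c Z y"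
    using x y by (auto simp: noisy_optimal_def)
  have "energy n k c x - energy n k c y \<le>
     (\<Sum>u\<in>?U. \<Sum>i<k. Z (s i, u) * (2 - 2 * y u i)) - (\<Sum>u\<in>?U. \<Sum>i<k. Z (s i, u) * (2 - 2 * x u i))"
    using le N_eq[OF v xf, of Z] N_eq[OF v y, of Z] by (simp add: noisy_objective_def)
  also have "\<dots> = (\<Sum>u\<in>?U. 2 * ((\<Sum>i<k. Z (s i, u) * x u i) - (\<Sum>i<k. Z (s i, u) * y u i)))"
    by (simp add: sum_subtractf[symmetric] sum_distrib_left algebra_simps)
  also have "\<dots> \<le> (\<Sum>u\<in>?U. 4 * (t + (\<Sum>i<k. h (s i, u))))"
  proof (intro sum_mono)
    fix u assume u: "u \<in> ?U"
    then have "u < n" by simp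
    have zb': "\<forall>i<k. \<bar>Z (s i, u)\<bar> \<le> t + h (s i, u)" using zb u by auto
    have hh: "\<forall>i<k. 0 \<le> h (s i, u)" using h by auto
    have "\<bar>\<Sum>i<k. Z (s i, u) * x u i\<bar> \<le> t + (\<Sum>i<k. h (s i, u))"
      using xf \<open>u<n\<close> zb' hh by (intro simplex_bound) (auto simp: feasible_def)
    moreover have "\<bar>\<Sum>i<k. Z (s i, u) * y u i\<bar> \<le> t + (\<Sum>i<k. h (s i, u))"
      using y \<open>u<n\<close> zb' hh by (intro simplex_bound) (auto simp: feasible_def)
    ultimately show "2 * ((\<Sum>i<k. Z (s i, u) * x u i) - (\<Sum>i<k. Z (s i, u) * y u i))
       \<le> 4 * (t + (\<Sum>i<k. h (s i, u)))" by (auto simp: abs_le_iff)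
  qed
  also have "\<dots> = 4 * (\<Sum>u\<in>?U. t + (\<Sum>i<k. h (s i, u)))" by (simp add: sum_distrib_left)
  finally show ?thesis .
qed



lemma in_simplex_basis: "i < k \<Longrightarrow> in_simplex k (basis_vec i)"
  by (simp add: in_simplex_def basis_vec_def)

lemma feasible_exists:
  assumes v: "valid_instance n k s c" shows "\<exists>y. feasible n k s y"
proof -
  have inj: "inj_on s {..<k}" and k: "2 \<le> k" using v by (auto simp: valid_instance_def)
  define y where "y = (\<lambda>u. if u \<in> s ` {..<k} then basis_vec (the_inv_into {..<k} s u) else basis_vec 0)"
  have "feasible n k s y"
    unfolding feasible_def
  proof safe
    fix u assume "u < n"
    show "in_simplex k (y u)"
    proof (cases "u \<in> s ` {..<k}")
      case True
      then obtain i where "i < k" "u = s i" by auto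
      then show ?thesis using inj by (simp add: y_def the_inv_into_f_f in_simplex_basis)
    next
      case False then show ?thesis using k by (simp add: y_def in_simplex_basis)
    qed
  next
    fix i j assume "i < k" "j < k"
    then show "y (s i) j = basis_vec i j" using inj by (simp add: y_def the_inv_into_f_f)
  qed
  then show ?thesis by blast
qed

lemma energy_nonneg: "valid_instance n k s c \<Longrightarrow> 0 \<le> energy n k c x"
  unfolding energy_def valid_instance_def l1dist_def
  by (intro sum_nonneg) (auto intro!: mult_nonneg_nonneg sum_nonneg)

lemma OPT_nonneg: assumes v: "valid_instance n k s c" shows "0 \<le> OPT c n k s"
  unfolding OPT_def using feasible_exists[OF v] energy_nonneg[OF v]
  by (intro cInf_greatest) auto

lemma opt_gap:
  assumes v: "valid_instance n k s c" and B: "\<forall>y. feasible n k s y \<longrightarrow> energy n k c x - energy n k c y \<le> B"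
  shows "energy n k c x - OPT c n k s \<le> B"
proof -
  have "energy n k c x - B \<le> OPT c n k s"
    unfolding OPT_def using feasible_exists[OF v] B
    by (intro cInf_greatest) force+
  then show ?thesis by simp
qed

lemma noise_comp:
  assumes p: "p \<in> I" and b: "b > 0"
  shows "has_bochner_integral (PiM I (\<lambda>_. laplace b)) (\<lambda>Z. exp (\<bar>Z p\<bar>/(2*b))) 2"
proof -
  let ?N = "PiM I (\<lambda>_. laplace b)"
  have d: "distr ?N (laplace b) (\<lambda>Z. Z p) = laplace b"
    using distr_PiM_component[of I "\<lambda>_. laplace b" p] prob_laplace[OF b] p by simp
  have m: "(\<lambda>Z. Z p) \<in> measurable ?N (laplace b)"
    using p by (rule measurable_component_singleton)
  have f: "(\<lambda>x. exp (\<bar>x\<bar>/(2*b))) \<in> borel_measurable (laplace b)"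
    unfolding laplace_def by simp
  have "has_bochner_integral (distr ?N (laplace b) (\<lambda>Z. Z p)) (\<lambda>x. exp (\<bar>x\<bar>/(2*b))) 2"
    using d laplace_moment[OF b] by simp
  then show ?thesis
    by (simp add: has_bochner_integral_iff integrable_distr_eq[OF m f] integral_distr[OF m f])
qed

lemma abs_le_exp:
  assumes b: "b > 0" and k: "real k > 0"
  shows "\<bar>z\<bar> \<le> 2*b*ln (real k) + (2*b/real k) * exp (\<bar>z\<bar>/(2*b))"
proof -
  define w where "w = \<bar>z\<bar> - 2*b*ln (real k)"
  have "w/(2*b) \<le> exp (w/(2*b))" using exp_ge_add_one_self[of "w/(2*b)"] by linarith
  also have "exp (w/(2*b)) = exp (\<bar>z\<bar>/(2*b)) / real k"
    using b k by (simp add: w_def diff_divide_distrib exp_diff)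
  finally have "w \<le> 2*b * (exp (\<bar>z\<bar>/(2*b)) / real k)" using b by (simp add: field_simps)
  then show ?thesis by (simp add: w_def)
qed

lemma ln2_gt: "ln 2 > (1/2::real)"
proof -
  have "exp (1/2::real) * exp (1/2) = exp 1" by (simp add: exp_add[symmetric])
  also have "\<dots> \<le> 3" by (rule exp_le)
  finally have h3: "exp (1/2::real) * exp (1/2) \<le> 3" .
  have "exp (1/2::real) < 2"
  proof (rule ccontr)
    assume "\<not> exp (1/2::real) < 2"
    then have "2 \<le> exp (1/2::real)" by simp
    then have "2 * 2 \<le> exp (1/2::real) * exp (1/2)" by (intro mult_mono) auto
    then show False using h3 by simp
  qed
  then show ?thesis by (metis exp_less_cancel_iff exp_ln zero_less_numeral)
qed



lemma hbi_const: "prob_space M \<Longrightarrow> has_bochner_integral M (\<lambda>_. c::real) c"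
  by (simp add: has_bochner_integral_iff prob_space.prob_space prob_space.finite_measure finite_measure.integrable_const)

lemma sqrt2_lt: "sqrt 2 < (3/2::real)"
  by (rule real_less_lsqrt) (auto simp: power2_eq_square)

lemma part1:
  assumes e: "eps > 0" and v: "valid_instance n k s c"
    and opt: "\<forall>Z\<in>space (noise_measure eps n k s). noisy_optimal n k s c Z (sel Z)"
  shows "(\<integral>Z. energy n k c (sel Z) \<partial>noise_measure eps n k s) - OPT c n k s
        \<le> 60 * real n * real k * ln (real k) / eps"
proof -
  define b where "b = sqrt 2 * real k / eps"
  have k2: "2 \<le> k" and kn: "k \<le> n" using v by (auto simp: valid_instance_def)
  have b: "b > 0" using e k2 by (simp add: b_def)
  let ?I = "noise_index n k s"
  let ?U = "{..<n} - terminals k s"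
  let ?M = "noise_measure eps n k s"
  have N: "?M = PiM ?I (\<lambda>_. laplace b)" by (simp add: noise_measure_def b_def)
  have ps: "prob_space ?M" unfolding N by (intro prob_space_PiM prob_laplace b)
  have fin: "finite ?U" by simp
  have inI: "(s i, u) \<in> ?I" if "i < k" "u \<in> ?U" for i u
    using that by (simp add: noise_index_def terminals_def)
  define t where "t = 2*b*ln (real k)"
  have t0: "0 \<le> t" using b k2 by (simp add: t_def)
  define R where "R Z = 4 * (\<Sum>u\<in>?U. t + (\<Sum>i<k. (2*b/real k) * exp (\<bar>Z (s i,u)\<bar>/(2*b))))" for Z :: "nat \<times> nat \<Rightarrow> real"
  have R0: "0 \<le> R Z" for Z unfolding R_def using t0 b
    by (intro mult_nonneg_nonneg sum_nonneg add_nonneg_nonneg) auto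
  have pw: "energy n k c (sel Z) \<le> OPT c n k s + R Z" if Z: "Z \<in> space ?M" for Z
  proof -
    have "energy n k c (sel Z) - OPT c n k s \<le> R Z"
    proof (rule opt_gap[OF v], intro allI impI)
      fix y assume y: "feasible n k s y"
      show "energy n k c (sel Z) - energy n k c y \<le> R Z"
        unfolding R_def t_def
      proof (rule det_bound[OF v opt[rule_format, OF Z] y])
        show "\<forall>p. 0 \<le> (2*b/real k) * exp (\<bar>Z p\<bar>/(2*b))" using b by auto
        show "\<forall>i<k. \<forall>u\<in>?U. \<bar>Z (s i, u)\<bar> \<le> 2*b*ln (real k) + (2*b/real k) * exp (\<bar>Z (s i, u)\<bar>/(2*b))"
          using abs_le_exp[OF b, of k] k2 by auto
      qed
    qed
    then show ?thesis by simp
  qed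
  have hb: "has_bochner_integral ?M (\<lambda>Z. OPT c n k s + R Z)
      (OPT c n k s + 4 * (\<Sum>u\<in>?U. t + (\<Sum>i<k. (2*b/real k) * 2)))"
    unfolding R_def
  proof (intro has_bochner_integral_add has_bochner_integral_mult_right has_bochner_integral_sum)
    show "has_bochner_integral ?M (\<lambda>_. OPT c n k s) (OPT c n k s)" using ps by (rule hbi_const)
    show "has_bochner_integral ?M (\<lambda>_. t) t" using ps by (rule hbi_const)
    fix u i assume "u \<in> ?U" "i \<in> {..<k}"
    then show "has_bochner_integral ?M (\<lambda>Z. exp (\<bar>Z (s i,u)\<bar>/(2*b))) 2"
      unfolding N using inI b by (intro noise_comp) auto
  qed
  have "(\<integral>Z. energy n k c (sel Z) \<partial>?M) \<le> (\<integral>Z. OPT c n k s + R Z \<partial>?M)"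
    using hb OPT_nonneg[OF v] R0 pw
    by (intro integral_mono') (auto simp: has_bochner_integral_iff intro: add_nonneg_nonneg)
  also have "\<dots> = OPT c n k s + 4 * (\<Sum>u\<in>?U. t + (\<Sum>i<k. (2*b/real k) * 2))"
    using hb by (simp add: has_bochner_integral_iff)
  also have "(\<Sum>u\<in>?U. t + (\<Sum>i<k. (2*b/real k) * 2)) = real (card ?U) * (t + 4*b)"
    using k2 by simp
  finally have g: "(\<integral>Z. energy n k c (sel Z) \<partial>?M) - OPT c n k s \<le> 4 * (real (card ?U) * (t + 4*b))"
    by simp
  have cU: "real (card ?U) \<le> real n"
    by (metis card_Diff_subset card_lessThan card_mono diff_le_self finite_lessThan of_nat_le_iff Diff_subset)
  have lk: "ln (real k) > 1/2"
  proof -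
    have "ln 2 \<le> ln (real k)" using k2 by simp
    then show ?thesis using ln2_gt by linarith
  qed
  have "4 * (real (card ?U) * (t + 4*b)) \<le> 4 * (real n * (t + 4*b))"
    using cU t0 b by (intro mult_left_mono mult_right_mono) auto
  also have "\<dots> \<le> 4 * (real n * (10 * b * ln (real k)))"
    using lk b unfolding t_def by (intro mult_left_mono) (auto intro!: mult_left_mono)
  also have "\<dots> = 40 * sqrt 2 * real n * real k * ln (real k) / eps"
    by (simp add: b_def)
  also have "\<dots> \<le> 60 * real n * real k * ln (real k) / eps"
  proof -
    have "0 \<le> real n * real k * ln (real k) / eps" using e k2 lk by simp
    then have "40 * sqrt 2 * (real n * real k * ln (real k) / eps) \<le> 60 * (real n * real k * ln (real k) / eps)"
      using sqrt2_lt by (intro mult_right_mono) auto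
    then show ?thesis by simp
  qed
  finally show ?thesis using g by linarith
qed

lemma part2:
  assumes a: "a > 0" and e: "eps > 0" and v: "valid_instance n k s c"
    and opt: "\<forall>Z\<in>space (noise_measure eps n k s). noisy_optimal n k s c Z (sel Z)"
    and meas: "(\<lambda>Z. energy n k c (sel Z)) \<in> borel_measurable (noise_measure eps n k s)"
  shows "measure (noise_measure eps n k s)
        {Z \<in> space (noise_measure eps n k s).
           energy n k c (sel Z) - OPT c n k s \<le> (12*(2+a)) * real n * real k * ln (real n * real k) / eps}
        \<ge> 1 - (real n * real k) powr (- a)"
proof -
  define b where "b = sqrt 2 * real k / eps"
  have k2: "2 \<le> k" and kn: "k \<le> n" using v by (auto simp: valid_instance_def)
  have b: "b > 0" using e k2 by (simp add: b_def)
  let ?I = "noise_index n k s"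
  let ?U = "{..<n} - terminals k s"
  let ?M = "noise_measure eps n k s"
  have N: "?M = PiM ?I (\<lambda>_. laplace b)" by (simp add: noise_measure_def b_def)
  have ps: "prob_space ?M" unfolding N by (intro prob_space_PiM prob_laplace b)
  interpret P: prob_space ?M by (rule ps)
  have inI: "(s i, u) \<in> ?I" if "i < k" "u \<in> ?U" for i u
    using that by (simp add: noise_index_def terminals_def)
  have finI: "finite ?I" by (simp add: noise_index_def terminals_def)
  define L where "L = ln (real n * real k)"
  have nk: "4 \<le> real n * real k"
  proof -
    have "2 * 2 \<le> real n * real k" using k2 kn by (intro mult_mono) auto
    then show ?thesis by simp
  qed
  have L2: "ln 2 \<le> L" unfolding L_def using nk by simp
  have L0: "0 \<le> L" using L2 ln2_gt by linarith
  define r where "r = 2*b*((1+a)*L + ln 2)"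
  have r0: "0 \<le> r" using b a L0 ln2_gt unfolding r_def by (intro mult_nonneg_nonneg) auto
  define K where "K = (12*(2+a)) * real n * real k * ln (real n * real k) / eps"
  define G where "G = {Z \<in> space ?M. energy n k c (sel Z) - OPT c n k s \<le> K}"
  have Gs: "G \<in> sets ?M" unfolding G_def using meas by measurable
  have cU: "real (card ?U) \<le> real n"
    by (metis card_Diff_subset card_lessThan card_mono diff_le_self finite_lessThan of_nat_le_iff Diff_subset)
  have nrK: "4 * (real n * r) \<le> K"
  proof -
    have "4 * (real n * r) = 8 * real n * b * ((1+a)*L + ln 2)" by (simp add: r_def)
    also have "\<dots> \<le> 8 * real n * b * ((2+a) * L)"
      using L2 b by (intro mult_left_mono) (auto simp: algebra_simps)
    also have "\<dots> = 8 * sqrt 2 * ((2+a) * real n * real k * L / eps)" by (simp add: b_def)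
    also have "\<dots> \<le> 12 * ((2+a) * real n * real k * L / eps)"
    proof (rule mult_right_mono)
      show "8 * sqrt 2 \<le> (12::real)" using sqrt2_lt by simp
      show "0 \<le> (2+a) * real n * real k * L / eps" using a e L0 by simp
    qed
    also have "\<dots> = K" by (simp add: K_def L_def)
    finally show ?thesis .
  qed
  define q where "q = exp (- r/(2*b))"
  define S where "S Z = (\<Sum>p\<in>?I. q * exp (\<bar>Z p\<bar>/(2*b)))" for Z :: "nat \<times> nat \<Rightarrow> real"
  have S0: "0 \<le> S Z" for Z unfolding S_def q_def by (intro sum_nonneg) auto
  have key: "indicator (space ?M - G) Z \<le> S Z" if Z: "Z \<in> space ?M" for Z
  proof (cases "Z \<in> G")
    case True then show ?thesis using S0 by simp
  next
    case False
    have "\<exists>p\<in>?I. r < \<bar>Z p\<bar>"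
    proof (rule ccontr)
      assume "\<not> (\<exists>p\<in>?I. r < \<bar>Z p\<bar>)"
      then have allr: "\<forall>p\<in>?I. \<bar>Z p\<bar> \<le> r" by auto
      have "energy n k c (sel Z) - OPT c n k s \<le> 4 * (\<Sum>u\<in>?U. r + (\<Sum>i<k. (\<lambda>_. 0::real) (s i, u)))"
      proof (rule opt_gap[OF v], intro allI impI)
        fix y assume y: "feasible n k s y"
        show "energy n k c (sel Z) - energy n k c y \<le> 4 * (\<Sum>u\<in>?U. r + (\<Sum>i<k. (\<lambda>_. 0::real) (s i, u)))"
          by (rule det_bound[OF v opt[rule_format, OF Z] y]) (use allr inI in auto)
      qed
      also have "\<dots> = 4 * (real (card ?U) * r)" by simp
      also have "\<dots> \<le> 4 * (real n * r)" using cU r0 by (intro mult_left_mono mult_right_mono) auto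
      also have "\<dots> \<le> K" by (rule nrK)
      finally have "Z \<in> G" using Z by (simp add: G_def)
      then show False using False by simp
    qed
    then obtain p where p: "p \<in> ?I" "r < \<bar>Z p\<bar>" by auto
    have "1 \<le> q * exp (\<bar>Z p\<bar>/(2*b))"
    proof -
      have "q * exp (\<bar>Z p\<bar>/(2*b)) = exp ((\<bar>Z p\<bar> - r)/(2*b))"
        by (simp add: q_def exp_add[symmetric] diff_divide_distrib)
      also have "1 \<le> \<dots>" using p b by simp
      finally show ?thesis by simp
    qed
    also have "\<dots> \<le> S Z" unfolding S_def q_def using p finI by (intro member_le_sum) auto
    finally show ?thesis by (simp add: indicator_def)
  qed
  have hbS: "has_bochner_integral ?M S (\<Sum>p\<in>?I. q * 2)"
    unfolding S_def
  proof (intro has_bochner_integral_sum has_bochner_integral_mult_right)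
    fix p assume "p \<in> ?I"
    then show "has_bochner_integral ?M (\<lambda>Z. exp (\<bar>Z p\<bar>/(2*b))) 2"
      unfolding N using b by (intro noise_comp) auto
  qed
  have "measure ?M (space ?M - G) = (\<integral>Z. indicator (space ?M - G) Z \<partial>?M)"
    by (simp add: Int_absorb2 Diff_subset)
  also have "\<dots> \<le> (\<integral>Z. S Z \<partial>?M)"
    using hbS key S0 by (intro integral_mono') (auto simp: has_bochner_integral_iff)
  also have "\<dots> = real (card ?I) * (2 * q)" using hbS by (simp add: has_bochner_integral_iff)
  also have "\<dots> \<le> (real n * real k) * (2 * q)"
  proof (rule mult_right_mono)
    have "card ?I = card (terminals k s) * card ?U" by (simp add: noise_index_def card_cartesian_product)
    also have "\<dots> \<le> k * n"
    proof (rule mult_mono)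
      show "card (terminals k s) \<le> k" unfolding terminals_def by (metis card_image_le card_lessThan finite_lessThan)
      show "card ?U \<le> n" using cU by simp
    qed auto
    finally show "real (card ?I) \<le> real n * real k" by (simp add: mult.commute of_nat_mult[symmetric] del: of_nat_mult)
    show "0 \<le> 2 * q" by (simp add: q_def)
  qed
  also have "2 * q = (real n * real k) powr (-(1+a))"
  proof -
    have "2 * q = 2 * exp (- ((1+a)*L) - ln 2)" using b by (simp add: q_def r_def)
    also have "\<dots> = exp (- ((1+a)*L))" by (simp add: exp_diff)
    also have "\<dots> = (real n * real k) powr (-(1+a))" using nk k2 kn by (simp add: powr_def L_def algebra_simps)
    finally show ?thesis .
  qed
  also have "(real n * real k) * (real n * real k) powr (-(1+a)) = (real n * real k) powr (-a)"
  proof -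
    have "(real n * real k) powr (-a) = (real n * real k) powr (1 + (-(1+a)))" by simp
    also have "\<dots> = (real n * real k) powr 1 * (real n * real k) powr (-(1+a))"
      by (rule powr_add)
    also have "(real n * real k) powr 1 = real n * real k" by simp
    finally show ?thesis by simp
  qed
  finally have "measure ?M (space ?M - G) \<le> (real n * real k) powr (-a)" .
  moreover have "measure ?M (space ?M - G) = 1 - measure ?M G" using Gs by (rule P.prob_compl)
  ultimately show ?thesis unfolding G_def K_def by simp
qed

theorem theorem4p6:
  shows
  "(\<exists>C::real. \<forall>eps n k s c sel.
      eps > 0 \<longrightarrow> valid_instance n k s c \<longrightarrow>
      (\<forall>Z\<in>space (noise_measure eps n k s). noisy_optimal n k s c Z (sel Z)) \<longrightarrow>
      (\<lambda>Z. energy n k c (sel Z)) \<in> borel_measurable (noise_measure eps n k s) \<longrightarrow>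
      (\<integral>Z. energy n k c (sel Z) \<partial>noise_measure eps n k s) - OPT c n k s
        \<le> C * real n * real k * ln (real k) / eps)
   \<and>
   (\<forall>a::real. a > 0 \<longrightarrow> (\<exists>C::real. \<forall>eps n k s c sel.
      eps > 0 \<longrightarrow> valid_instance n k s c \<longrightarrow>
      (\<forall>Z\<in>space (noise_measure eps n k s). noisy_optimal n k s c Z (sel Z)) \<longrightarrow>
      (\<lambda>Z. energy n k c (sel Z)) \<in> borel_measurable (noise_measure eps n k s) \<longrightarrow>
      measure (noise_measure eps n k s)
        {Z \<in> space (noise_measure eps n k s).
           energy n k c (sel Z) - OPT c n k s \<le> C * real n * real k * ln (real n * real k) / eps}
        \<ge> 1 - (real n * real k) powr (- a)))"
proof (intro conjI)
  show "\<exists>C::real. \<forall>eps n k s c sel.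
      eps > 0 \<longrightarrow> valid_instance n k s c \<longrightarrow>
      (\<forall>Z\<in>space (noise_measure eps n k s). noisy_optimal n k s c Z (sel Z)) \<longrightarrow>
      (\<lambda>Z. energy n k c (sel Z)) \<in> borel_measurable (noise_measure eps n k s) \<longrightarrow>
      (\<integral>Z. energy n k c (sel Z) \<partial>noise_measure eps n k s) - OPT c n k s
        \<le> C * real n * real k * ln (real k) / eps"
    by (intro exI[of _ 60] allI impI) (rule part1; assumption)
next
  show "\<forall>a::real. a > 0 \<longrightarrow> (\<exists>C::real. \<forall>eps n k s c sel.
      eps > 0 \<longrightarrow> valid_instance n k s c \<longrightarrow>
      (\<forall>Z\<in>space (noise_measure eps n k s). noisy_optimal n k s c Z (sel Z)) \<longrightarrow>
      (\<lambda>Z. energy n k c (sel Z)) \<in> borel_measurable (noise_measure eps n k s) \<longrightarrow>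
      measure (noise_measure eps n k s)
        {Z \<in> space (noise_measure eps n k s).
           energy n k c (sel Z) - OPT c n k s \<le> C * real n * real k * ln (real n * real k) / eps}
        \<ge> 1 - (real n * real k) powr (- a))"
  proof (intro allI impI)
    fix a :: real assume a: "a > 0"
    show "\<exists>C::real. \<forall>eps n k s c sel.
      eps > 0 \<longrightarrow> valid_instance n k s c \<longrightarrow>
      (\<forall>Z\<in>space (noise_measure eps n k s). noisy_optimal n k s c Z (sel Z)) \<longrightarrow>
      (\<lambda>Z. energy n k c (sel Z)) \<in> borel_measurable (noise_measure eps n k s) \<longrightarrow>
      measure (noise_measure eps n k s)
        {Z \<in> space (noise_measure eps n k s).
           energy n k c (sel Z) - OPT c n k s \<le> C * real n * real k * ln (real n * real k) / eps}
        \<ge> 1 - (real n * real k) powr (- a)"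
      by (intro exI[of _ "12*(2+a)"] allI impI) (rule part2[OF a]; assumption)
  qed
qed

end
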